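(* Let $f:\{1,\dots,n\}\to\{0,1\}$ and $S=\{i: f(i)=1\}$. Define $s(f(i),i)=0$ if $f(i)=0$ and $s(f(i),i)=i$ if $f(i)=1$, and let $T$ be the string of length $4n+2$ over the alphabet $\{0,\$\}\cup\{1,\dots,n\}$ given by $$T=0^{2n}\circ\$\circ\Big(\bigcirc_{i=1}^{n} 0\circ s(f(i),i)\Big)\circ 0,$$ where $\circ$ and $\bigcirc$ denote concatenation and $0^{2n}$ is $2n$ copies of the symbol $0$. Then the LZ77 factorization of $T$ has exactly $z=2|S|+4$ factors.
   Context: LZ77 factorization (greedy): start with $i=1$; while $i\le |T|$: if $T[i]$ is the first occurrence of its symbol, $T[i]$ is the next factor and $i\gets i+1$; otherwise take the largest $j\ge i$ such that $T[i..j]$ occurs in $T$ starting at some position $i'<i$ (overlap allowed), make $T[i..j]$ the next factor and set $i\gets j+1$. $z$ is the number of factors. The symbols $0,\$,1,\dots,n$ are pairwise distinct. *)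

theory Defs
  imports Main
begin

datatype sym = Zero | Dollar | Num nat

text \<open>Strings are lists, positions are 0-indexed (position p here is position p+1 in the paper).
  The substring of length l starting at p is  take l (drop p T).\<close>

text \<open>T[i..i+l-1] occurs in T starting at some earlier position i' < i (overlap allowed).\<close>
definition occurs_before :: "sym list \<Rightarrow> nat \<Rightarrow> nat \<Rightarrow> bool" where
  "occurs_before T i l \<longleftrightarrow> (\<exists>i'<i. take l (drop i' T) = take l (drop i T))"

definition lz_factor_len :: "sym list \<Rightarrow> nat \<Rightarrow> nat" where
  "lz_factor_len T i =
     (if T ! i \<notin> set (take i T) then 1
      else (GREATEST l. i + l \<le> length T \<and> occurs_before T i l))"

text \<open>lz_factors T i k: the greedy LZ77 factorization of the suffix of T from position i
  (continuing the process started at position 0) produces exactly k factors.\<close>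
inductive lz_factors :: "sym list \<Rightarrow> nat \<Rightarrow> nat \<Rightarrow> bool" where
  lz_done: "i = length T \<Longrightarrow> lz_factors T i 0"
| lz_step: "i < length T \<Longrightarrow> lz_factors T (i + lz_factor_len T i) k \<Longrightarrow> lz_factors T i (Suc k)"

definition s_sym :: "(nat \<Rightarrow> nat) \<Rightarrow> nat \<Rightarrow> sym" where
  "s_sym f i = (if f i = 0 then Zero else Num i)"

definition lz_text :: "nat \<Rightarrow> (nat \<Rightarrow> nat) \<Rightarrow> sym list" where
  "lz_text n f = replicate (2*n) Zero @ [Dollar] @ concat (map (\<lambda>i. [Zero, s_sym f i]) [1..<n+1]) @ [Zero]"

end

theory Submission imports Defs begin

definition blk :: "(nat \<Rightarrow> sym) \<Rightarrow> nat \<Rightarrow> sym list" where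
  "blk g m = concat (map (\<lambda>i. [Zero, g i]) [1..<m+1])"

lemma blk_Suc: "blk g (Suc m) = blk g m @ [Zero, g (Suc m)]"
proof -
  have "[1..<Suc m+1] = [1..<m+1] @ [Suc m]" by simp
  then show ?thesis unfolding blk_def by simp
qed

lemma blk_len: "length (blk g m) = 2*m"
  by (induction m) (simp_all add: blk_Suc, simp add: blk_def)

lemma blk_nth: "q < 2*m \<Longrightarrow> blk g m ! q = (if even q then Zero else g (q div 2 + 1))"
proof (induction m arbitrary: q)
  case 0 then show ?case by simp
next
  case (Suc m)
  show ?case
  proof (cases "q < 2*m")
    case True then show ?thesis using Suc by (simp add: blk_Suc nth_append blk_len)
  next
    case False
    then have "q = 2*m \<or> q = 2*m+1" using Suc.prems by auto
    then show ?thesis by (auto simp: blk_Suc nth_append blk_len)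
  qed
qed

lemma T_def': "lz_text n f = replicate (2*n) Zero @ [Dollar] @ blk (s_sym f) n @ [Zero]"
  by (simp add: lz_text_def blk_def)

definition tn :: "nat \<Rightarrow> (nat\<Rightarrow>nat) \<Rightarrow> nat \<Rightarrow> sym" where
 "tn n f p = (if p < 2*n then Zero else if p = 2*n then Dollar else if p \<ge> 4*n+1 then Zero
     else if odd (p-2*n) then Zero else s_sym f ((p - 2*n) div 2))"

lemma T_len: "length (lz_text n f) = 4*n+2"
  by (simp add: T_def' blk_len)

lemma T_nth: assumes "p < 4*n+2" shows "lz_text n f ! p = tn n f p"
proof -
  consider "p < 2*n" | "p = 2*n" | "p = 4*n+1" | q where "p = 2*n+1+q" "q < 2*n"
  proof -
    assume a1: "p < 2*n \<Longrightarrow> thesis" and a2: "p = 2*n \<Longrightarrow> thesis" and a3: "p = 4*n+1 \<Longrightarrow> thesis"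
      and a4: "\<And>q. p = 2*n+1+q \<Longrightarrow> q < 2*n \<Longrightarrow> thesis"
    show thesis
    proof (cases "p < 2*n \<or> p = 2*n \<or> p = 4*n+1")
      case True then show ?thesis using a1 a2 a3 by blast
    next
      case False
      then have "p = 2*n+1+(p-2*n-1)" "p-2*n-1 < 2*n" using assms by auto
      then show ?thesis by (rule a4)
    qed
  qed
  then show ?thesis
  proof cases
    case 1 then show ?thesis by (simp add: T_def' tn_def nth_append)
  next
    case 2 then show ?thesis by (simp add: T_def' tn_def nth_append)
  next
    case 3 then show ?thesis by (simp add: T_def' tn_def nth_append blk_len)
  next
    case 4
    have "(p - 2*n) = Suc q" using 4 by simp
    then show ?thesis using 4 by (auto simp: T_def' tn_def nth_append blk_len blk_nth s_sym_def elim!: oddE)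
  qed
qed


lemma factor_new: "T ! i \<notin> set (take i T) \<Longrightarrow> lz_factor_len T i = 1"
  by (simp add: lz_factor_len_def)

lemma factor_run:
  assumes "i' < i" "0<L" "i+L \<le> length T" "take L (drop i' T) = take L (drop i T)"
    "i+L = length T \<or> T!(i+L) \<notin> set (take (i+L) T)"
  shows "lz_factor_len T i = L"
proof -
  have "T!i = take L (drop i T) ! 0" using assms by simp
  also have "\<dots> = take L (drop i' T) ! 0" using assms(4) by simp
  also have "\<dots> = T ! i'" using assms(1-3) by simp
  finally have eq: "T!i = T!i'" .
  have "T!i \<in> set (take i T)" unfolding eq using assms by (auto simp: in_set_conv_nth)
  then have "lz_factor_len T i = (GREATEST l. i + l \<le> length T \<and> occurs_before T i l)"
    by (simp add: lz_factor_len_def)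
  also have "\<dots> = L"
  proof (rule Greatest_equality)
    show "i + L \<le> length T \<and> occurs_before T i L" using assms by (auto simp: occurs_before_def)
  next
    fix y assume "i + y \<le> length T \<and> occurs_before T i y"
    then obtain j where j: "j < i" "take y (drop j T) = take y (drop i T)" "i + y \<le> length T"
      by (auto simp: occurs_before_def)
    show "y \<le> L"
    proof (rule ccontr)
      assume "\<not> y \<le> L"
      then have yL: "L < y" by simp
      then have nin: "T!(i+L) \<notin> set (take (i+L) T)" using assms(5) j by auto
      have e1: "take y (drop j T) ! L = take y (drop i T) ! L" using j(2) by simp
      have "take y (drop j T) ! L = T!(j+L)" using yL j(1,3) by simp
      moreover have "take y (drop i T) ! L = T!(i+L)" using yL j(1,3) by simp
      ultimately have "T!(j+L) = T!(i+L)" using e1 by simp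
      moreover have "T!(j+L) \<in> set (take (i+L) T)" using j yL by (auto simp: in_set_conv_nth intro!: exI[of _ "j+L"])
      ultimately show False using nin by simp
    qed
  qed
  finally show ?thesis .
qed

lemma take_eq_nth: "i+L \<le> length T \<Longrightarrow> j+L \<le> length T \<Longrightarrow> (\<forall>t<L. T!(j+t) = T!(i+t)) \<Longrightarrow> take L (drop j T) = take L (drop i T)"
  by (intro nth_equalityI) auto

lemma notin_take: "(\<forall>p<q. T!p \<noteq> x) \<Longrightarrow> q \<le> length T \<Longrightarrow> x \<notin> set(take q T)"
  by (auto simp: in_set_conv_nth)


lemma s_sym_cases: "s_sym f k = Zero \<or> s_sym f k = Num k"
  by (simp add: s_sym_def)

lemma claim:
  assumes A1: "\<forall>i\<in>{1..n}. f i \<in> {0, 1}"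
    and A2: "S = {i\<in>{1..n}. f i = 1}"
    and A3: "S \<noteq> {}"
  shows "1 \<le> j \<Longrightarrow> j \<le> n+1 \<Longrightarrow> lz_factors (lz_text n f) (2*n+2*j-1) (2*card {i\<in>S. j \<le> i} + 1)"
proof (induction "n+1-j" arbitrary: j rule: less_induct)
  case less
  define T where "T = lz_text n f"
  define p where "p = 2*n+2*j-1"
  have lenT: "length T = 4*n+2" by (simp add: T_def T_len)
  have Tn: "\<And>q. q < 4*n+2 \<Longrightarrow> T ! q = tn n f q" by (simp add: T_def T_nth)
  have sZ: "\<And>k. k \<in> {1..n} \<Longrightarrow> k \<notin> S \<Longrightarrow> s_sym f k = Zero"
    using A1 A2 by (auto simp: s_sym_def)
  have sN: "\<And>k. k \<in> S \<Longrightarrow> s_sym f k = Num k"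
    using A2 by (auto simp: s_sym_def)
  have pos: "0 < p" using less.prems by (simp add: p_def)
  have Tlow: "\<And>t. t < 2*n \<Longrightarrow> T ! t = Zero" using Tn by (simp add: tn_def)
  show ?case
  proof (cases "{i\<in>S. j \<le> i} = {}")
    case True
    have j2: "j \<ge> 2"
    proof (rule ccontr)
      assume "\<not> j \<ge> 2"
      then have "j = 1" using less.prems by simp
      then have "{i\<in>S. j \<le> i} = S" using A2 by auto
      then show False using True A3 by simp
    qed
    define L where "L = 4*n+2 - p"
    have L: "0 < L" "p + L = length T" "L \<le> 2*n" using j2 less.prems lenT by (auto simp: L_def p_def)
    have runZ: "\<forall>t<L. T!(p+t) = Zero"
    proof (intro allI impI)
      fix t assume t: "t < L"
      show "T!(p+t) = Zero"
      proof (cases "p+t \<ge> 4*n+1 \<or> odd (p+t-2*n)")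
        case True
        have "p+t < 4*n+2" "2*n < p+t" using t L lenT less.prems by (auto simp: p_def)
        then have "T!(p+t) = tn n f (p+t)" using Tn by simp
        then show ?thesis using True \<open>2*n < p+t\<close> by (auto simp: tn_def)
      next
        case False
        define k where "k = (p+t-2*n) div 2"
        have k: "j \<le> k" "k \<le> n" using False t L less.prems by (auto simp: k_def p_def elim!: oddE evenE)
        then have "k \<notin> S" using True by auto
        then have "s_sym f k = Zero" using sZ k less.prems by auto
        moreover have "p+t < 4*n+2" "2*n < p+t" using t L lenT less.prems by (auto simp: p_def)
        moreover then have "T!(p+t) = tn n f (p+t)" using Tn by simp
        ultimately show ?thesis using False by (simp add: tn_def k_def)
      qed
    qed
    have "lz_factor_len T p = L"
    proof (rule factor_run[of 0])
      show "take L (drop 0 T) = take L (drop p T)"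
        using L runZ Tlow by (intro take_eq_nth) auto
    qed (use L pos in auto)
    then have "lz_factors T p 1"
      using L by (auto intro!: lz_factors.intros simp: lenT)
    then show ?thesis using True by (simp only: T_def p_def card.empty) simp
  next
    case False
    define m where "m = Min {i\<in>S. j \<le> i}"
    have finS: "finite {i\<in>S. j \<le> i}" using A2 by auto
    have m: "m \<in> S" "j \<le> m" using Min_in[OF finS False] by (auto simp: m_def)
    have mmin: "\<And>k. k \<in> S \<Longrightarrow> j \<le> k \<Longrightarrow> m \<le> k" using finS by (auto simp: m_def)
    have mn: "1 \<le> m" "m \<le> n" using m A2 by auto
    define L where "L = 2*(m-j)+1"
    have L: "0 < L" "p + L = 2*n+2*m" "L \<le> 2*n" using m mn less.prems by (auto simp: L_def p_def)
    have runZ: "\<forall>t<L. T!(p+t) = Zero"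
    proof (intro allI impI)
      fix t assume t: "t < L"
      show "T!(p+t) = Zero"
      proof (cases "odd (p+t-2*n)")
        case True
        have "p+t < 4*n+2" "2*n < p+t" using t L mn less.prems by (auto simp: p_def)
        then have "T!(p+t) = tn n f (p+t)" using Tn by simp
        then show ?thesis using True \<open>2*n < p+t\<close> by (auto simp: tn_def)
      next
        case False
        define k where "k = (p+t-2*n) div 2"
        have k: "j \<le> k" "k < m" using False t L less.prems by (auto simp: k_def p_def elim!: oddE evenE)
        then have "k \<notin> S" using mmin by force
        then have "s_sym f k = Zero" using sZ k mn less.prems by auto
        moreover have "p+t < 4*n+1" "2*n < p+t" using t L mn less.prems by (auto simp: p_def)
        moreover then have "T!(p+t) = tn n f (p+t)" using Tn by simp
        ultimately show ?thesis using False by (simp add: tn_def k_def)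
      qed
    qed
    have Tm: "T!(2*n+2*m) = Num m" using Tn mn sN m by (auto simp: tn_def)
    have notin: "Num m \<notin> set (take (2*n+2*m) T)"
    proof (rule notin_take)
      show "2*n+2*m \<le> length T" using mn lenT by simp
      show "\<forall>q<2*n+2*m. T!q \<noteq> Num m"
      proof (intro allI impI)
        fix q assume q: "q < 2*n+2*m"
        have "(q-2*n) div 2 < m" using q mn by presburger
        then show "T!q \<noteq> Num m" using q mn Tn s_sym_cases[of f "(q-2*n) div 2"]
          by (auto simp: tn_def)
      qed
    qed
    have f1: "lz_factor_len T p = L"
    proof (rule factor_run[of 0])
      show "take L (drop 0 T) = take L (drop p T)"
        using L runZ Tlow lenT mn by (intro take_eq_nth) auto
      show "p + L = length T \<or> T ! (p + L) \<notin> set (take (p + L) T)"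
        using L Tm notin by simp
    qed (use L pos lenT mn in auto)
    have f2: "lz_factor_len T (2*n+2*m) = 1" using Tm notin by (simp add: factor_new)
    have IH: "lz_factors T (2*n+2*(m+1)-1) (2*card {i\<in>S. m+1 \<le> i} + 1)"
      unfolding T_def using m mn less.prems by (intro less.hyps) auto
    have setq: "{i\<in>S. j \<le> i} = insert m {i\<in>S. m+1 \<le> i}"
      using m mmin by force
    have fin2: "finite {i\<in>S. m+1 \<le> i}" using A2 by auto
    have card: "card {i\<in>S. j \<le> i} = Suc (card {i\<in>S. m+1 \<le> i})"
      unfolding setq using fin2 by simp
    have "lz_factors T (2*n+2*m) (Suc (2*card {i\<in>S. m+1 \<le> i} + 1))"
      apply (rule lz_step) using lenT mn IH f2 by auto
    then have "lz_factors T p (Suc (Suc (2*card {i\<in>S. m+1 \<le> i} + 1)))"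
    proof -
      have e: "p + lz_factor_len T p = 2*n+2*m" using f1 L by simp
      have "p < length T" using L lenT mn by simp
      then show "lz_factors T (2*n+2*m) (Suc (2*card {i\<in>S. m+1 \<le> i} + 1)) \<Longrightarrow> ?thesis"
        using lz_step[of p T, unfolded e] by blast
    qed
    then show ?thesis using card by (simp add: T_def p_def)
  qed
qed


theorem lemma13:
  fixes n :: nat and f :: "nat \<Rightarrow> nat" and S :: "nat set"
  assumes "\<forall>i\<in>{1..n}. f i \<in> {0, 1}"
    and "S = {i\<in>{1..n}. f i = 1}"
    and "S \<noteq> {}"
  shows "length (lz_text n f) = 4*n + 2 \<and> lz_factors (lz_text n f) 0 (2 * card S + 4)"
proof
  show "length (lz_text n f) = 4*n + 2" by (rule T_len)
  define T where "T = lz_text n f"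
  have lenT: "length T = 4*n+2" by (simp add: T_def T_len)
  have Tn: "\<And>q. q < 4*n+2 \<Longrightarrow> T ! q = tn n f q" by (simp add: T_def T_nth)
  have Tlow: "\<And>t. t < 2*n \<Longrightarrow> T ! t = Zero" using Tn by (simp add: tn_def)
  have n1: "1 \<le> n" using assms(2,3) by auto
  have TD: "T ! (2*n) = Dollar" using Tn by (simp add: tn_def)
  have Dnot: "Dollar \<notin> set (take (2*n) T)"
    by (rule notin_take) (use Tlow lenT in auto)
  have c: "lz_factors T (2*n+2*1-1) (2*card {i\<in>S. 1 \<le> i} + 1)"
    unfolding T_def using claim[OF assms, of 1] n1 by simp
  have "{i\<in>S. 1 \<le> i} = S" using assms(2) by auto
  with c have c1: "lz_factors T (2*n+1) (2*card S + 1)" by simp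
  have f3: "lz_factor_len T (2*n) = 1" using TD Dnot by (simp add: factor_new)
  have c2: "lz_factors T (2*n) (Suc (2*card S + 1))"
    by (rule lz_step) (use lenT f3 c1 in auto)
  have f2: "lz_factor_len T 1 = 2*n-1"
  proof (rule factor_run[of 0])
    show "take (2*n-1) (drop 0 T) = take (2*n-1) (drop 1 T)"
      using Tlow lenT n1 by (intro take_eq_nth) auto
    show "1 + (2*n-1) = length T \<or> T ! (1 + (2*n-1)) \<notin> set (take (1 + (2*n-1)) T)"
      using TD Dnot n1 by simp
  qed (use n1 lenT in auto)
  have c3: "lz_factors T 1 (Suc (Suc (2*card S + 1)))"
    by (rule lz_step) (use lenT f2 c2 n1 in auto)
  have f1: "lz_factor_len T 0 = 1" by (simp add: factor_new)
  have c4: "lz_factors T 0 (Suc (Suc (Suc (2*card S + 1))))"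
    by (rule lz_step) (use lenT f1 c3 in auto)
  have "Suc (Suc (Suc (2*card S + 1))) = 2 * card S + 4" by simp
  then show "lz_factors (lz_text n f) 0 (2 * card S + 4)" using c4 by (simp only: T_def)
qed

end
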